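(* Let $\Gamma=A\ast B$ with $A,B$ non-trivial, let $f=f_A\ast f_B$ be a split quasimorphism and $\widehat f$ its homogenization. Then $\mathrm{def}\,\widehat f\geq 2\max\{\mathrm{def}\, f_A,\mathrm{def}\, f_B\}$.
   Context: A quasimorphism is a map $f:\Gamma\to\mathbb{R}$ with $\mathrm{def}\, f=\sup_{g,h}|f(gh)-f(g)-f(h)|<\infty$; it is alternating if $f(g^{-1})=-f(g)$. Its homogenization is $\widehat f(g)=\lim_{n\to\infty}f(g^n)/n$. Each $1\neq g\in A\ast B$ has a unique normal form $g=a_1b_1\cdots a_nb_n$ ($a_i\in A$, $b_i\in B$, all non-trivial except possibly $a_1$ or $b_n$). For alternating quasimorphisms $f_A:A\to\mathbb{R}$, $f_B:B\to\mathbb{R}$, the split quasimorphism is $f(1)=0$ and $f(a_1b_1\cdots a_nb_n)=f_A(a_1)+f_B(b_1)+\dots+f_A(a_n)+f_B(b_n)$. *)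

theory Defs
  imports "HOL-Algebra.Group" "HOL-Library.Extended_Real" Complex_Main
begin

text \<open>Elements of A * B are reduced words: lists of letters Inl a (a in A, a not 1)
  and Inr b (b in B, b not 1), with no two adjacent letters from the same factor.
  The empty word is the identity.\<close>

fun fp_reduced :: "('a,'m) monoid_scheme \<Rightarrow> ('b,'n) monoid_scheme \<Rightarrow> ('a + 'b) list \<Rightarrow> bool" where
  "fp_reduced A B [] = True"
| "fp_reduced A B [Inl a] = (a \<in> carrier A \<and> a \<noteq> \<one>\<^bsub>A\<^esub>)"
| "fp_reduced A B [Inr b] = (b \<in> carrier B \<and> b \<noteq> \<one>\<^bsub>B\<^esub>)"
| "fp_reduced A B (Inl a # Inl a' # w) = False"
| "fp_reduced A B (Inr b # Inr b' # w) = False"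
| "fp_reduced A B (Inl a # Inr b # w) =
     (a \<in> carrier A \<and> a \<noteq> \<one>\<^bsub>A\<^esub> \<and> fp_reduced A B (Inr b # w))"
| "fp_reduced A B (Inr b # Inl a # w) =
     (b \<in> carrier B \<and> b \<noteq> \<one>\<^bsub>B\<^esub> \<and> fp_reduced A B (Inl a # w))"

fun fp_cons :: "('a,'m) monoid_scheme \<Rightarrow> ('b,'n) monoid_scheme \<Rightarrow> ('a + 'b) \<Rightarrow> ('a + 'b) list \<Rightarrow> ('a + 'b) list" where
  "fp_cons A B (Inl a) [] = (if a = \<one>\<^bsub>A\<^esub> then [] else [Inl a])"
| "fp_cons A B (Inr b) [] = (if b = \<one>\<^bsub>B\<^esub> then [] else [Inr b])"
| "fp_cons A B (Inl a) (Inl a' # w) =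
     (let c = a \<otimes>\<^bsub>A\<^esub> a' in if c = \<one>\<^bsub>A\<^esub> then w else Inl c # w)"
| "fp_cons A B (Inr b) (Inr b' # w) =
     (let c = b \<otimes>\<^bsub>B\<^esub> b' in if c = \<one>\<^bsub>B\<^esub> then w else Inr c # w)"
| "fp_cons A B (Inl a) (Inr b # w) =
     (if a = \<one>\<^bsub>A\<^esub> then Inr b # w else Inl a # Inr b # w)"
| "fp_cons A B (Inr b) (Inl a # w) =
     (if b = \<one>\<^bsub>B\<^esub> then Inl a # w else Inr b # Inl a # w)"

definition fp_mult :: "('a,'m) monoid_scheme \<Rightarrow> ('b,'n) monoid_scheme \<Rightarrow> ('a + 'b) list \<Rightarrow> ('a + 'b) list \<Rightarrow> ('a + 'b) list" where
  "fp_mult A B u v = foldr (fp_cons A B) u v"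

definition free_product :: "('a,'m) monoid_scheme \<Rightarrow> ('b,'n) monoid_scheme \<Rightarrow> ('a + 'b) list monoid" where
  "free_product A B = \<lparr>carrier = {w. fp_reduced A B w}, mult = fp_mult A B, one = []\<rparr>"

definition qm_defect :: "('g,'m) monoid_scheme \<Rightarrow> ('g \<Rightarrow> real) \<Rightarrow> ereal" where
  "qm_defect G f = (SUP p \<in> carrier G \<times> carrier G.
      ereal \<bar>f (fst p \<otimes>\<^bsub>G\<^esub> snd p) - f (fst p) - f (snd p)\<bar>)"

definition quasimorphism :: "('g,'m) monoid_scheme \<Rightarrow> ('g \<Rightarrow> real) \<Rightarrow> bool" where
  "quasimorphism G f \<longleftrightarrow> qm_defect G f < \<infinity>"

definition alternating :: "('g,'m) monoid_scheme \<Rightarrow> ('g \<Rightarrow> real) \<Rightarrow> bool" where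
  "alternating G f \<longleftrightarrow> (\<forall>g \<in> carrier G. f (inv\<^bsub>G\<^esub> g) = - f g)"

definition homogenization :: "('g,'m) monoid_scheme \<Rightarrow> ('g \<Rightarrow> real) \<Rightarrow> 'g \<Rightarrow> real" where
  "homogenization G f g = lim (\<lambda>n::nat. f (g [^]\<^bsub>G\<^esub> n) / real n)"

definition split_qm :: "('a \<Rightarrow> real) \<Rightarrow> ('b \<Rightarrow> real) \<Rightarrow> ('a + 'b) list \<Rightarrow> real" where
  "split_qm fA fB w = sum_list (map (case_sum fA fB) w)"

end

theory Submission
  imports Defs
begin

definition okl :: "('a,'m) monoid_scheme \<Rightarrow> ('b,'n) monoid_scheme \<Rightarrow> ('a + 'b) \<Rightarrow> bool" where
  "okl A B l = case_sum (\<lambda>a. a \<in> carrier A \<and> a \<noteq> \<one>\<^bsub>A\<^esub>) (\<lambda>b. b \<in> carrier B \<and> b \<noteq> \<one>\<^bsub>B\<^esub>) l"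

lemma red_iff: "fp_reduced A B w \<longleftrightarrow> (\<forall>l\<in>set w. okl A B l) \<and> successively (\<lambda>a b. isl a \<noteq> isl b) w"
  by (induction A B w rule: fp_reduced.induct) (auto simp: okl_def)

lemma cons_red: "fp_reduced A B (l # w) \<Longrightarrow> fp_cons A B l w = l # w"
  by (induction A B l w rule: fp_cons.induct) auto

lemma red_tl: "fp_reduced A B (l # w) \<Longrightarrow> fp_reduced A B w"
  by (auto simp: red_iff successively_Cons)

lemma mult_red: "fp_reduced A B (u @ v) \<Longrightarrow> fp_mult A B u v = u @ v"
proof (induction u)
  case Nil then show ?case by (simp add: fp_mult_def)
next
  case (Cons a u)
  then have "fp_mult A B u v = u @ v" using red_tl by (metis append_Cons)
  then show ?case using Cons.prems cons_red by (simp add: fp_mult_def)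
qed

lemma mult_snoc: "fp_mult A B (u @ [q]) v = fp_mult A B u (fp_cons A B q v)"
  by (simp add: fp_mult_def)

lemma sq_append: "split_qm fA fB (u @ v) = split_qm fA fB u + split_qm fA fB v"
  by (simp add: split_qm_def)

lemma pow_cyc:
  assumes "w \<noteq> []" "fp_reduced A B w" "isl (hd w) \<noteq> isl (last w)"
  shows "split_qm fA fB (w [^]\<^bsub>free_product A B\<^esub> n) = real n * split_qm fA fB w"
proof -
  have "n = 0 \<or> (w [^]\<^bsub>free_product A B\<^esub> n \<noteq> [] \<and> fp_reduced A B (w [^]\<^bsub>free_product A B\<^esub> n)
     \<and> hd (w [^]\<^bsub>free_product A B\<^esub> n) = hd w \<and> last (w [^]\<^bsub>free_product A B\<^esub> n) = last w)
     \<and> split_qm fA fB (w [^]\<^bsub>free_product A B\<^esub> n) = real n * split_qm fA fB w"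
  proof (induction n)
    case 0 then show ?case by (simp add: free_product_def split_qm_def)
  next
    case (Suc n)
    let ?u = "w [^]\<^bsub>free_product A B\<^esub> n"
    show ?case
    proof (cases "n = 0")
      case True
      then show ?thesis using assms by (simp add: free_product_def fp_mult_def)
    next
      case False
      with Suc have u: "?u \<noteq> []" "fp_reduced A B ?u" "hd ?u = hd w" "last ?u = last w"
        "split_qm fA fB ?u = real n * split_qm fA fB w" by auto
      have r: "fp_reduced A B (?u @ w)" using u assms
        by (auto simp: red_iff successively_append_iff)
      have e: "w [^]\<^bsub>free_product A B\<^esub> Suc n = ?u @ w"
        using mult_red[OF r] by (simp add: free_product_def)
      show ?thesis using e u r assms by (simp add: sq_append algebra_simps)
    qed
  qed
  then show ?thesis by (auto simp: free_product_def split_qm_def)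
qed

lemma lim_ev: assumes "\<And>n. n \<ge> 1 \<Longrightarrow> s n = c + d / real n" shows "lim s = (c::real)"
proof -
  have "(\<lambda>n. c + d / real n) \<longlonglongrightarrow> c + 0"
    by (intro tendsto_add tendsto_const tendsto_divide_0[OF tendsto_const] filterlim_at_top_imp_at_infinity filterlim_real_sequentially)
  then have "(\<lambda>n. c + d / real n) \<longlonglongrightarrow> c" by simp
  then have "s \<longlonglongrightarrow> c"
    by (rule Lim_transform_eventually) (auto intro!: eventually_sequentiallyI[of 1] simp: assms)
  then show ?thesis by (rule limI)
qed

lemma hom_cyc:
  assumes "w \<noteq> []" "fp_reduced A B w" "isl (hd w) \<noteq> isl (last w)"
  shows "homogenization (free_product A B) (split_qm fA fB) w = split_qm fA fB w"
  unfolding homogenization_def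
  by (rule lim_ev[where d=0]) (simp add: pow_cyc[OF assms])

lemma pow_merge:
  assumes W: "W = p # m @ [q]" and r: "fp_reduced A B W" and m: "m \<noteq> []"
    and pq: "isl p = isl q" and sp: "isl s = isl p" and so: "okl A B s"
    and c: "\<And>r. fp_cons A B q (p # r) = s # r"
  shows "n \<ge> 1 \<Longrightarrow> split_qm fA fB (W [^]\<^bsub>free_product A B\<^esub> n) =
     real n * (split_qm fA fB m + case_sum fA fB s) + (case_sum fA fB p + case_sum fA fB q - case_sum fA fB s)"
proof -
  assume n: "n \<ge> 1"
  have "\<exists>M. W [^]\<^bsub>free_product A B\<^esub> Suc k = p # M @ [q] \<and> M \<noteq> [] \<and> fp_reduced A B (p # M @ [q])
     \<and> split_qm fA fB (W [^]\<^bsub>free_product A B\<^esub> Suc k) =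
     real (Suc k) * (split_qm fA fB m + case_sum fA fB s) + (case_sum fA fB p + case_sum fA fB q - case_sum fA fB s)" for k
  proof (induction k)
    case 0
    show ?case using W r m by (auto simp: free_product_def fp_mult_def split_qm_def)
  next
    case (Suc k)
    then obtain M where M: "W [^]\<^bsub>free_product A B\<^esub> Suc k = p # M @ [q]" "M \<noteq> []"
      "fp_reduced A B (p # M @ [q])" "split_qm fA fB (W [^]\<^bsub>free_product A B\<^esub> Suc k) =
     real (Suc k) * (split_qm fA fB m + case_sum fA fB s) + (case_sum fA fB p + case_sum fA fB q - case_sum fA fB s)"
      by blast
    have red2: "fp_reduced A B ((p # M) @ (s # m @ [q]))"
      using M(2,3) r W m pq sp so
      by (auto simp: red_iff successively_append_iff successively_Cons)
    have "W [^]\<^bsub>free_product A B\<^esub> Suc (Suc k) = fp_mult A B (p # M @ [q]) W"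
      using M(1) by (simp add: free_product_def)
    also have "\<dots> = fp_mult A B (p # M) (s # m @ [q])"
      using mult_snoc[of A B "p # M" q W] W c by simp
    also have "\<dots> = p # (M @ s # m) @ [q]"
      using mult_red[OF red2] by simp
    finally have e: "W [^]\<^bsub>free_product A B\<^esub> Suc (Suc k) = p # (M @ s # m) @ [q]" .
    have "split_qm fA fB (p # (M @ s # m) @ [q]) = split_qm fA fB (p # M @ [q]) + case_sum fA fB s + split_qm fA fB m"
      by (simp add: split_qm_def)
    then show ?case using e M red2
      by (intro exI[of _ "M @ s # m"]) (auto simp: algebra_simps)
  qed
  then show ?thesis using n by (metis Suc_le_D One_nat_def Suc_le_eq less_imp_Suc_add)
qed

lemma hom_merge:
  assumes W: "W = p # m @ [q]" and r: "fp_reduced A B W" and m: "m \<noteq> []"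
    and pq: "isl p = isl q" and sp: "isl s = isl p" and so: "okl A B s"
    and c: "\<And>r. fp_cons A B q (p # r) = s # r"
  shows "homogenization (free_product A B) (split_qm fA fB) W = split_qm fA fB m + case_sum fA fB s"
  unfolding homogenization_def
  apply (rule lim_ev[where d="case_sum fA fB p + case_sum fA fB q - case_sum fA fB s"])
  using pow_merge[OF assms] by (simp add: field_simps)

lemma R_upper:
  assumes "fp_reduced A B g" "fp_reduced A B h"
  shows "ereal \<bar>H (fp_mult A B g h) - H g - H h\<bar> \<le> qm_defect (free_product A B) H"
  unfolding qm_defect_def
  by (rule SUP_upper2[of "(g,h)"]) (use assms in \<open>auto simp: free_product_def\<close>)

lemma R_nonneg: "0 \<le> qm_defect (free_product A B) H"
  by (rule order_trans[OF _ R_upper[of A B "[]" "[]" H]]) auto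

lemma alt_one: "group A \<Longrightarrow> alternating A fA \<Longrightarrow> fA \<one>\<^bsub>A\<^esub> = 0"
proof -
  assume gA: "group A" and alt: "alternating A fA"
  have "fA (inv\<^bsub>A\<^esub> \<one>\<^bsub>A\<^esub>) = - fA \<one>\<^bsub>A\<^esub>"
    using alt gA unfolding alternating_def by (simp add: group.is_monoid monoid.one_closed)
  moreover have "inv\<^bsub>A\<^esub> \<one>\<^bsub>A\<^esub> = \<one>\<^bsub>A\<^esub>" using gA by (simp add: group.is_monoid monoid.inv_one)
  ultimately show ?thesis by simp
qed

lemma keyA:
  assumes gA: "group A" and gB: "group B" and alt: "alternating A fA" and altB: "alternating B fB"
    and x: "x \<in> carrier A" and y: "y \<in> carrier A" and b: "b \<in> carrier B" "b \<noteq> \<one>\<^bsub>B\<^esub>"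
  shows "ereal (2 * \<bar>fA (x \<otimes>\<^bsub>A\<^esub> y) - fA x - fA y\<bar>)
     \<le> qm_defect (free_product A B) (homogenization (free_product A B) (split_qm fA fB))"
proof (cases "x = \<one>\<^bsub>A\<^esub> \<or> y = \<one>\<^bsub>A\<^esub> \<or> x \<otimes>\<^bsub>A\<^esub> y = \<one>\<^bsub>A\<^esub>")
  case True
  have "fA (x \<otimes>\<^bsub>A\<^esub> y) - fA x - fA y = 0"
  proof -
    have f1: "fA \<one>\<^bsub>A\<^esub> = 0" by (rule alt_one[OF gA alt])
    show ?thesis
    proof (cases "x \<otimes>\<^bsub>A\<^esub> y = \<one>\<^bsub>A\<^esub>")
      case True
      then have "y = inv\<^bsub>A\<^esub> x" using gA x y by (metis group.inv_equality group.inv_comm)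
      then show ?thesis using True f1 alt x unfolding alternating_def by simp
    next
      case False
      then show ?thesis using \<open>x = \<one>\<^bsub>A\<^esub> \<or> y = \<one>\<^bsub>A\<^esub> \<or> x \<otimes>\<^bsub>A\<^esub> y = \<one>\<^bsub>A\<^esub>\<close> f1 x y gA
        by (auto simp: group.is_monoid monoid.l_one monoid.r_one)
    qed
  qed
  then show ?thesis by (metis R_nonneg zero_ereal_def abs_zero mult_zero_right)
next
  case False
  define b' where "b' = inv\<^bsub>B\<^esub> b"
  have b': "b' \<in> carrier B" "b' \<noteq> \<one>\<^bsub>B\<^esub>" "b' \<otimes>\<^bsub>B\<^esub> b = \<one>\<^bsub>B\<^esub>"
    using gB b unfolding b'_def
    by (auto simp: group.inv_closed group.l_inv group.inv_eq_1_iff)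
  have xy: "x \<otimes>\<^bsub>A\<^esub> y \<in> carrier A" using gA x y by (simp add: group.is_monoid monoid.m_closed)
  let ?H = "homogenization (free_product A B) (split_qm fA fB)"
  define g where "g = [Inl y, Inr b, Inl x, Inr b']"
  define h where "h = [Inr b, Inl y, Inr b', Inl x]"
  have rg: "fp_reduced A B g" and rh: "fp_reduced A B h" using False x y b b' by (auto simp: g_def h_def)
  have gh: "fp_mult A B g h = Inl y # [Inr b, Inl (x \<otimes>\<^bsub>A\<^esub> y), Inr b'] @ [Inl x]"
    using False b b' by (simp add: g_def h_def fp_mult_def Let_def)
  have Hg: "?H g = fA y + fB b + fA x + fB b'"
    using hom_cyc[OF _ rg] by (simp add: g_def split_qm_def)
  have Hh: "?H h = fA y + fB b + fA x + fB b'"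
    using hom_cyc[OF _ rh] by (simp add: h_def split_qm_def)
  have rgh: "fp_reduced A B (fp_mult A B g h)" using gh False x y b b' xy by simp
  have Hgh: "?H (fp_mult A B g h) = fB b + fA (x \<otimes>\<^bsub>A\<^esub> y) + fB b' + fA (x \<otimes>\<^bsub>A\<^esub> y)"
    using hom_merge[OF gh rgh _ _ _ _, of "Inl (x \<otimes>\<^bsub>A\<^esub> y)" fA fB] False xy
    by (simp add: okl_def Let_def split_qm_def)
  have "fB b' = - fB b" using altB b unfolding alternating_def b'_def by simp
  then have "\<bar>?H (fp_mult A B g h) - ?H g - ?H h\<bar> = 2 * \<bar>fA (x \<otimes>\<^bsub>A\<^esub> y) - fA x - fA y\<bar>"
    using Hg Hh Hgh by (simp add: abs_if)
  then show ?thesis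
    using R_upper[OF rg rh, of ?H] by simp
qed


lemma keyB:
  assumes gB: "group B" and gA: "group A" and alt: "alternating B fB" and altB: "alternating A fA"
    and x: "x \<in> carrier B" and y: "y \<in> carrier B" and b: "b \<in> carrier A" "b \<noteq> \<one>\<^bsub>A\<^esub>"
  shows "ereal (2 * \<bar>fB (x \<otimes>\<^bsub>B\<^esub> y) - fB x - fB y\<bar>)
     \<le> qm_defect (free_product A B) (homogenization (free_product A B) (split_qm fA fB))"
proof (cases "x = \<one>\<^bsub>B\<^esub> \<or> y = \<one>\<^bsub>B\<^esub> \<or> x \<otimes>\<^bsub>B\<^esub> y = \<one>\<^bsub>B\<^esub>")
  case True
  have "fB (x \<otimes>\<^bsub>B\<^esub> y) - fB x - fB y = 0"
  proof -
    have f1: "fB \<one>\<^bsub>B\<^esub> = 0" by (rule alt_one[OF gB alt])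
    show ?thesis
    proof (cases "x \<otimes>\<^bsub>B\<^esub> y = \<one>\<^bsub>B\<^esub>")
      case True
      then have "y = inv\<^bsub>B\<^esub> x" using gB x y by (metis group.inv_equality group.inv_comm)
      then show ?thesis using True f1 alt x unfolding alternating_def by simp
    next
      case False
      then show ?thesis using \<open>x = \<one>\<^bsub>B\<^esub> \<or> y = \<one>\<^bsub>B\<^esub> \<or> x \<otimes>\<^bsub>B\<^esub> y = \<one>\<^bsub>B\<^esub>\<close> f1 x y gB
        by (auto simp: group.is_monoid monoid.l_one monoid.r_one)
    qed
  qed
  then show ?thesis by (metis R_nonneg zero_ereal_def abs_zero mult_zero_right)
next
  case False
  define b' where "b' = inv\<^bsub>A\<^esub> b"
  have b': "b' \<in> carrier A" "b' \<noteq> \<one>\<^bsub>A\<^esub>" "b' \<otimes>\<^bsub>A\<^esub> b = \<one>\<^bsub>A\<^esub>"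
    using gA b unfolding b'_def
    by (auto simp: group.inv_closed group.l_inv group.inv_eq_1_iff)
  have xy: "x \<otimes>\<^bsub>B\<^esub> y \<in> carrier B" using gB x y by (simp add: group.is_monoid monoid.m_closed)
  let ?H = "homogenization (free_product A B) (split_qm fA fB)"
  define g where "g = [Inr y, Inl b, Inr x, Inl b']"
  define h where "h = [Inl b, Inr y, Inl b', Inr x]"
  have rg: "fp_reduced A B g" and rh: "fp_reduced A B h" using False x y b b' by (auto simp: g_def h_def)
  have gh: "fp_mult A B g h = Inr y # [Inl b, Inr (x \<otimes>\<^bsub>B\<^esub> y), Inl b'] @ [Inr x]"
    using False b b' by (simp add: g_def h_def fp_mult_def Let_def)
  have Hg: "?H g = fB y + fA b + fB x + fA b'"
    using hom_cyc[OF _ rg] by (simp add: g_def split_qm_def)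
  have Hh: "?H h = fB y + fA b + fB x + fA b'"
    using hom_cyc[OF _ rh] by (simp add: h_def split_qm_def)
  have rgh: "fp_reduced A B (fp_mult A B g h)" using gh False x y b b' xy by simp
  have Hgh: "?H (fp_mult A B g h) = fA b + fB (x \<otimes>\<^bsub>B\<^esub> y) + fA b' + fB (x \<otimes>\<^bsub>B\<^esub> y)"
    using hom_merge[OF gh rgh _ _ _ _, of "Inr (x \<otimes>\<^bsub>B\<^esub> y)" fA fB] False xy
    by (simp add: okl_def Let_def split_qm_def)
  have "fA b' = - fA b" using altB b unfolding alternating_def b'_def by simp
  then have "\<bar>?H (fp_mult A B g h) - ?H g - ?H h\<bar> = 2 * \<bar>fB (x \<otimes>\<^bsub>B\<^esub> y) - fB x - fB y\<bar>"
    using Hg Hh Hgh by (simp add: abs_if)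
  then show ?thesis
    using R_upper[OF rg rh, of ?H] by simp
qed

lemma sup_bound:
  assumes "group A" and "\<And>x y. x \<in> carrier A \<Longrightarrow> y \<in> carrier A \<Longrightarrow>
      ereal (2 * \<bar>fA (x \<otimes>\<^bsub>A\<^esub> y) - fA x - fA y\<bar>) \<le> R"
  shows "2 * qm_defect A fA \<le> R"
proof -
  have ne: "carrier A \<times> carrier A \<noteq> {}" using assms(1) monoid.one_closed[OF group.is_monoid[OF assms(1)]] by blast
  have "2 * qm_defect A fA = (SUP p \<in> carrier A \<times> carrier A.
      ereal 2 * ereal \<bar>fA (fst p \<otimes>\<^bsub>A\<^esub> snd p) - fA (fst p) - fA (snd p)\<bar>)"
    unfolding qm_defect_def by (subst SUP_ereal_mult_left[OF ne]) auto
  also have "\<dots> \<le> R"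
    by (rule SUP_least) (use assms(2) in auto)
  finally show ?thesis .
qed

theorem lemma3p2:
  fixes A :: "('a,'m) monoid_scheme" and B :: "('b,'n) monoid_scheme"
    and fA :: "'a \<Rightarrow> real" and fB :: "'b \<Rightarrow> real"
  assumes "group A" and "group B"
    and "carrier A \<noteq> {\<one>\<^bsub>A\<^esub>}" and "carrier B \<noteq> {\<one>\<^bsub>B\<^esub>}"
    and "quasimorphism A fA" and "alternating A fA"
    and "quasimorphism B fB" and "alternating B fB"
  shows "qm_defect (free_product A B) (homogenization (free_product A B) (split_qm fA fB))
           \<ge> 2 * max (qm_defect A fA) (qm_defect B fB)"
proof -
  obtain a where a: "a \<in> carrier A" "a \<noteq> \<one>\<^bsub>A\<^esub>"
    using assms(1,3) by (auto simp: group.is_monoid monoid.one_closed)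
  obtain b where b: "b \<in> carrier B" "b \<noteq> \<one>\<^bsub>B\<^esub>"
    using assms(2,4) by (auto simp: group.is_monoid monoid.one_closed)
  have 1: "2 * qm_defect A fA \<le> qm_defect (free_product A B) (homogenization (free_product A B) (split_qm fA fB))"
    by (rule sup_bound[OF assms(1)], rule keyA) (use assms a b in auto)
  have 2: "2 * qm_defect B fB \<le> qm_defect (free_product A B) (homogenization (free_product A B) (split_qm fA fB))"
    by (rule sup_bound[OF assms(2)], rule keyB) (use assms a b in auto)
  show ?thesis using 1 2 by (simp add: max_def)
qed

end
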